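(* Let ${\mathbf{x}}_1,\dots,{\mathbf{x}}_T\in\mathbb{R}^N$ with ${\mathbf{C}}_{xx}:=\frac1T\sum_{t=1}^T{\mathbf{x}}_t{\mathbf{x}}_t^\top$ positive definite, and let ${\mathbf{W}}=[{\mathbf{w}}_1,\dots,{\mathbf{w}}_K]\in\mathbb{R}^{N\times K}$ have unit-norm columns with $\operatorname{span}\{{\mathbf{w}}_1{\mathbf{w}}_1^\top,\dots,{\mathbf{w}}_K{\mathbf{w}}_K^\top\}={\mathbb{S}}^N$. For ${\mathbf{y}}_1,\dots,{\mathbf{y}}_T\in\mathbb{R}^N$ and ${\mathbf{g}}\in\mathbb{R}^K$ define $$L({\mathbf{y}}_1,\dots,{\mathbf{y}}_T,{\mathbf{g}}):=\frac1T\sum_{t=1}^T\Big(\|{\mathbf{x}}_t-{\mathbf{y}}_t\|_2^2+\sum_{i=1}^K g_i\big\{({\mathbf{w}}_i^\top{\mathbf{y}}_t)^2-1\big\}\Big).$$ Let ${\mathbf{y}}_t^\ast:={\mathbf{C}}_{xx}^{-1/2}{\mathbf{x}}_t$ and let ${\mathbf{g}}^\ast\in\mathbb{R}^K$ be any vector with ${\mathbf{I}}_N+{\mathbf{W}}\operatorname{diag}({\mathbf{g}}^\ast){\mathbf{W}}^\top={\mathbf{C}}_{xx}^{1/2}$ (such a vector exists). Then $({\mathbf{y}}_1^\ast,\dots,{\mathbf{y}}_T^\ast,{\mathbf{g}}^\ast)$ is a saddle point of $L$: $$L({\mathbf{y}}^\ast_{1:T},{\mathbf{g}})\le L({\mathbf{y}}^\ast_{1:T},{\mathbf{g}}^\ast)\le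 L({\mathbf{y}}_{1:T},{\mathbf{g}}^\ast)\quad\text{for all }{\mathbf{y}}_1,\dots,{\mathbf{y}}_T\in\mathbb{R}^N,\ {\mathbf{g}}\in\mathbb{R}^K,$$ and consequently $$\min_{{\mathbf{y}}_1,\dots,{\mathbf{y}}_T}\max_{{\mathbf{g}}}L=\max_{{\mathbf{g}}}\min_{{\mathbf{y}}_1,\dots,{\mathbf{y}}_T}L=L({\mathbf{y}}^\ast_{1:T},{\mathbf{g}}^\ast).$$ Moreover, ${\mathbf{y}}_{1:T}\mapsto L({\mathbf{y}}_{1:T},{\mathbf{g}}^\ast)$ is strictly convex with unique minimizer ${\mathbf{y}}^\ast_{1:T}$.
   Context: ${\mathbb{S}}^N$ is the space of $N\times N$ real symmetric matrices; $\operatorname{diag}({\mathbf{g}})$ is the diagonal matrix with diagonal ${\mathbf{g}}$; ${\mathbf{C}}_{xx}^{1/2}$ is the symmetric positive definite square root and ${\mathbf{C}}_{xx}^{-1/2}$ its inverse. *)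

theory Defs
  imports "HOL-Analysis.Analysis"
begin

definition sym_mat :: "real^'n^'n \<Rightarrow> bool" where
  "sym_mat A \<longleftrightarrow> transpose A = A"

definition posdef :: "real^'n^'n \<Rightarrow> bool" where
  "posdef A \<longleftrightarrow> sym_mat A \<and> (\<forall>v. v \<noteq> 0 \<longrightarrow> v \<bullet> (A *v v) > 0)"

text \<open>The symmetric positive definite square root (unique when A is positive definite).\<close>
definition mat_sqrt :: "real^'n^'n \<Rightarrow> real^'n^'n" where
  "mat_sqrt A = (THE S. posdef S \<and> S ** S = A)"

definition outer :: "real^'n \<Rightarrow> real^'n^'n" where
  "outer v = (\<chi> i j. v$i * v$j)"

definition diag_mat :: "real^'k \<Rightarrow> real^'k^'k" where
  "diag_mat g = (\<chi> i j. if i = j then g$i else 0)"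

definition cov :: "real^'n^'t \<Rightarrow> real^'n^'n" where
  "cov x = (1 / real CARD('t)) *\<^sub>R (\<Sum>t\<in>UNIV. outer (x$t))"

definition lagr :: "real^'n^'t \<Rightarrow> real^'k^'n \<Rightarrow> real^'n^'t \<Rightarrow> real^'k \<Rightarrow> real" where
  "lagr x W y g = (1 / real CARD('t)) *
     (\<Sum>t\<in>UNIV. (norm (x$t - y$t))\<^sup>2 +
        (\<Sum>i\<in>UNIV. g$i * ((column i W \<bullet> y$t)\<^sup>2 - 1)))"

definition strictly_convex_on :: "'a::real_vector set \<Rightarrow> ('a \<Rightarrow> real) \<Rightarrow> bool" where
  "strictly_convex_on S f \<longleftrightarrow> convex S \<and>
    (\<forall>x\<in>S. \<forall>y\<in>S. x \<noteq> y \<longrightarrow> (\<forall>u. 0 < u \<and> u < 1 \<longrightarrow>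
       f (u *\<^sub>R x + (1 - u) *\<^sub>R y) < u * f x + (1 - u) * f y))"

end

theory Submission
  imports Defs
begin

lemma sym_iff: "sym_mat (A::real^'n^'n) \<longleftrightarrow> (\<forall>u v. (A *v u) \<bullet> v = u \<bullet> (A *v v))"
proof -
  have e: "(A *v u) \<bullet> v = u \<bullet> (transpose A *v v)" for u v
    by (metis dot_lmul_matrix inner_commute transpose_matrix_vector)
  show ?thesis unfolding sym_mat_def e
    by (metis matrix_eq vector_eq_ldot)
qed

lemma symD: "sym_mat (A::real^'n^'n) \<Longrightarrow> (A *v u) \<bullet> v = u \<bullet> (A *v v)"
  using sym_iff by blast

lemma quad_zero:
  fixes a b :: real
  assumes "b \<ge> 0" "\<And>t. 2*t*a + t^2*b \<ge> 0"
  shows "a = 0"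
proof (rule ccontr)
  assume "a \<noteq> 0"
  define c where "c = -a/(b+1)"
  have sb: "c*(b+1) = -a" using assms(1) by (simp add: c_def)
  have "(b+1)^2 * (2*c*a + c^2*b) = 2*a*(b+1)*(c*(b+1)) + (c*(b+1))^2*b"
    by (simp add: algebra_simps power2_eq_square)
  also have "\<dots> = -(a^2*(b+2))" unfolding sb by (simp add: algebra_simps power2_eq_square)
  also have "\<dots> < 0" using \<open>a\<noteq>0\<close> assms(1) by (simp add: mult_pos_pos)
  finally have "(b+1)^2 * (2*c*a + c^2*b) < 0" .
  moreover have "(b+1)^2 * (2*c*a + c^2*b) \<ge> 0" using assms by simp
  ultimately show False by linarith
qed

lemma eigvec:
  fixes A :: "real^'n^'n"
  assumes sA: "sym_mat A" and V: "subspace V" and nz: "V \<noteq> {0}"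
    and inv: "\<forall>v\<in>V. A *v v \<in> V"
  shows "\<exists>v\<in>V. norm v = 1 \<and> A *v v = (v \<bullet> (A *v v)) *\<^sub>R v"
proof -
  let ?K = "V \<inter> sphere 0 1"
  have cK: "compact ?K"
    using V by (simp add: closed_subspace closed_Int_compact)
  obtain w where w: "w \<in> V" "w \<noteq> 0" using nz V subspace_0 by blast
  have "w /\<^sub>R norm w \<in> ?K" using w V by (simp add: subspace_scale)
  hence neK: "?K \<noteq> {}" by blast
  have cont: "continuous_on ?K (\<lambda>v. v \<bullet> (A *v v))"
    by (intro continuous_intros linear_continuous_on matrix_vector_mul_linear bounded_linear_intros)
  obtain v where v: "v \<in> ?K" and mx: "\<forall>y\<in>?K. y \<bullet> (A *v y) \<le> v \<bullet> (A *v v)"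
    using continuous_attains_sup[OF cK neK cont] by blast
  define l where "l = v \<bullet> (A *v v)"
  have vV: "v \<in> V" and nv: "norm v = 1" using v by auto
  have vv: "v \<bullet> v = 1" using nv by (simp add: dot_square_norm)
  have le: "u \<bullet> (A *v u) \<le> l * (u \<bullet> u)" if "u \<in> V" for u
  proof (cases "u = 0")
    case True then show ?thesis by simp
  next
    case False
    let ?y = "u /\<^sub>R norm u"
    have "?y \<in> ?K" using that False V by (simp add: subspace_scale)
    hence "?y \<bullet> (A *v ?y) \<le> l" using mx l_def by blast
    hence "(u \<bullet> (A *v u)) / (norm u)^2 \<le> l"
      by (simp add: matrix_vector_mult_scaleR power2_eq_square divide_inverse mult.commute mult.left_commute)
    moreover have "(norm u)^2 > 0" using False by simp
    ultimately have "u \<bullet> (A *v u) \<le> l * (norm u)^2" by (simp add: divide_le_eq)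
    thus ?thesis by (simp add: dot_square_norm)
  qed
  define M where "M u = l *\<^sub>R u - A *v u" for u
  have Mpos: "u \<bullet> M u \<ge> 0" if "u \<in> V" for u
    using le[OF that] by (simp add: M_def inner_diff_right)
  have Mv0: "v \<bullet> M v = 0" using vv by (simp add: M_def inner_diff_right l_def)
  have Msym: "a \<bullet> M b = b \<bullet> M a" for a b
    using symD[OF sA, of b a] by (simp add: M_def inner_diff_right inner_commute)
  have Mlin: "M (a + t *\<^sub>R b) = M a + t *\<^sub>R M b" for a b t
    by (simp add: M_def algebra_simps)
  have MvV: "M v \<in> V" using vV inv V by (simp add: M_def subspace_diff subspace_scale)
  have "M v \<bullet> M v = 0"
  proof -
    let ?u = "M v"
    have "2*t*(?u \<bullet> M v) + t^2*(?u \<bullet> M ?u) \<ge> 0" for t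
    proof -
      have "(v + t *\<^sub>R ?u) \<in> V" using vV MvV V by (simp add: subspace_add subspace_scale)
      hence "0 \<le> (v + t *\<^sub>R ?u) \<bullet> M (v + t *\<^sub>R ?u)" by (rule Mpos)
      also have "\<dots> = v \<bullet> M v + t * (v \<bullet> M ?u) + t * (?u \<bullet> M v) + t^2 * (?u \<bullet> M ?u)"
        unfolding Mlin by (simp add: inner_add_left inner_add_right power2_eq_square algebra_simps)
      also have "\<dots> = 2*t*(?u \<bullet> M v) + t^2*(?u \<bullet> M ?u)"
        using Mv0 Msym[of v ?u] by simp
      finally show ?thesis .
    qed
    thus ?thesis using quad_zero Mpos[OF MvV] by blast
  qed
  hence "M v = 0" by simp
  thus ?thesis using vV nv by (intro bexI[of _ v]) (auto simp: M_def l_def)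
qed

lemma spectral_sub:
  fixes A :: "real^'n^'n"
  assumes sA: "sym_mat A"
  shows "subspace V \<Longrightarrow> (\<forall>v\<in>V. A *v v \<in> V) \<Longrightarrow>
    \<exists>B. B \<subseteq> V \<and> finite B \<and> pairwise orthogonal B \<and>
       (\<forall>b\<in>B. norm b = 1 \<and> A *v b = (b \<bullet> (A *v b)) *\<^sub>R b) \<and> span B = V"
proof (induction "dim V" arbitrary: V rule: less_induct)
  case less
  show ?case
  proof (cases "V = {0}")
    case True
    then show ?thesis by (intro exI[of _ "{}"]) auto
  next
    case False
    obtain v where vV: "v \<in> V" and nv: "norm v = 1" and Av: "A *v v = (v \<bullet> (A *v v)) *\<^sub>R v"
      using eigvec[OF sA less.prems(1) False less.prems(2)] by blast
    have vv: "v \<bullet> v = 1" using nv by (simp add: dot_square_norm)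
    define V' where "V' = V \<inter> {u. v \<bullet> u = 0}"
    have sV': "subspace V'" unfolding V'_def
      using subspace_orthogonal_to_vector[of v] less.prems(1)
      by (intro subspace_inter) (auto simp: orthogonal_def)
    have invV': "\<forall>u\<in>V'. A *v u \<in> V'"
    proof
      fix u assume u: "u \<in> V'"
      have "v \<bullet> (A *v u) = (A *v v) \<bullet> u" using symD[OF sA, of v u] by simp
      also have "\<dots> = 0" using u by (subst Av) (simp add: V'_def)
      finally show "A *v u \<in> V'" using u less.prems(2) by (auto simp: V'_def)
    qed
    have "v \<notin> V'" using vv by (simp add: V'_def)
    hence "V' \<subset> V" using vV unfolding V'_def by blast
    hence "span V' \<subset> span V" using sV' less.prems(1) by (metis span_eq_iff)
    hence "dim V' < dim V" by (rule dim_psubset)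
    then obtain B' where B': "B' \<subseteq> V'" "finite B'" "pairwise orthogonal B'"
       "\<forall>b\<in>B'. norm b = 1 \<and> A *v b = (b \<bullet> (A *v b)) *\<^sub>R b" "span B' = V'"
      using less.hyps[OF _ sV' invV'] by blast
    have vB': "v \<notin> B'" using B'(1) vv by (auto simp: V'_def)
    show ?thesis
    proof (intro exI[of _ "insert v B'"] conjI)
      show "insert v B' \<subseteq> V" using B'(1) vV by (auto simp: V'_def)
      show "finite (insert v B')" using B'(2) by simp
      show "pairwise orthogonal (insert v B')"
        using B'(3) B'(1) unfolding pairwise_insert
        by (auto simp: V'_def orthogonal_def inner_commute)
      show "\<forall>b\<in>insert v B'. norm b = 1 \<and> A *v b = (b \<bullet> (A *v b)) *\<^sub>R b"
        using B'(4) nv Av by auto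
      show "span (insert v B') = V"
      proof
        show "span (insert v B') \<subseteq> V"
          using \<open>insert v B' \<subseteq> V\<close> less.prems(1) by (simp add: span_minimal)
        show "V \<subseteq> span (insert v B')"
        proof
          fix u assume u: "u \<in> V"
          have "u - (v \<bullet> u) *\<^sub>R v \<in> V'" using u vV vv less.prems(1)
            by (auto simp: V'_def subspace_diff subspace_scale inner_diff_right)
          hence "u - (v \<bullet> u) *\<^sub>R v \<in> span (insert v B')"
            using B'(5) span_mono[of B' "insert v B'"] by auto
          moreover have "(v \<bullet> u) *\<^sub>R v \<in> span (insert v B')"
            by (simp add: span_base span_mul)
          ultimately have "(u - (v \<bullet> u) *\<^sub>R v) + (v \<bullet> u) *\<^sub>R v \<in> span (insert v B')"
            by (rule span_add)
          thus "u \<in> span (insert v B')" by simp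
        qed
      qed
    qed
  qed
qed

lemma spectral:
  fixes A :: "real^'n^'n"
  assumes sA: "sym_mat A"
  shows "\<exists>B. finite B \<and> pairwise orthogonal B \<and>
       (\<forall>b\<in>B. norm b = 1 \<and> A *v b = (b \<bullet> (A *v b)) *\<^sub>R b) \<and>
       (\<forall>u. u = (\<Sum>b\<in>B. (u \<bullet> b) *\<^sub>R b))"
proof -
  obtain B where B: "finite B" "pairwise orthogonal B"
       "\<forall>b\<in>B. norm b = 1 \<and> A *v b = (b \<bullet> (A *v b)) *\<^sub>R b" "span B = UNIV"
    using spectral_sub[OF sA, of UNIV] by auto
  show ?thesis using B orthonormal_basis_expand[OF B(2) _ _ B(1)] by auto
qed

lemma orth_coef:
  fixes B :: "(real^'n) set"
  assumes "finite B" "pairwise orthogonal B" "\<forall>b\<in>B. norm b = 1" "b0 \<in> B"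
  shows "(\<Sum>b\<in>B. c b *\<^sub>R b) \<bullet> b0 = c b0"
proof -
  have "(\<Sum>b\<in>B. c b *\<^sub>R b) \<bullet> b0 = (\<Sum>b\<in>B. if b = b0 then c b0 else 0)"
    unfolding inner_sum_left
  proof (rule sum.cong)
    fix b assume b: "b \<in> B"
    show "(c b *\<^sub>R b) \<bullet> b0 = (if b = b0 then c b0 else 0)"
    proof (cases "b = b0")
      case True thus ?thesis using assms(3) b by (simp add: dot_square_norm)
    next
      case False thus ?thesis using assms(2) b assms(4) by (simp add: pairwise_def orthogonal_def)
    qed
  qed simp
  also have "\<dots> = c b0" using assms by simp
  finally show ?thesis .
qed

lemma outer_mult: "outer (b::real^'n) *v u = (b \<bullet> u) *\<^sub>R b"
  by (simp add: outer_def vec_eq_iff matrix_vector_mult_def inner_vec_def sum_distrib_left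
      algebra_simps)

lemma sum_mat_mult: "finite B \<Longrightarrow> (\<Sum>b\<in>B. M b) *v (u::real^'n) = (\<Sum>b\<in>B. M b *v u)"
  by (induction B rule: finite_induct) (auto simp: matrix_vector_mult_add_rdistrib)

lemma smat_mult:
  assumes "finite B"
  shows "(\<Sum>b\<in>B. c b *\<^sub>R outer b) *v (u::real^'n) = (\<Sum>b\<in>B. (c b * (b \<bullet> u)) *\<^sub>R b)"
  by (simp add: sum_mat_mult[OF assms] scaleR_matrix_vector_assoc[symmetric] outer_mult)

lemma spec_expand:
  fixes A :: "real^'n^'n"
  assumes "\<forall>b\<in>B. A *v b = (b \<bullet> (A *v b)) *\<^sub>R b" "u = (\<Sum>b\<in>B. (u \<bullet> b) *\<^sub>R b)"
  shows "A *v u = (\<Sum>b\<in>B. ((b \<bullet> (A *v b)) * (b \<bullet> u)) *\<^sub>R b)"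
proof -
  have "A *v u = A *v (\<Sum>b\<in>B. (u \<bullet> b) *\<^sub>R b)" using assms(2) by simp
  also have "\<dots> = (\<Sum>b\<in>B. (u \<bullet> b) *\<^sub>R (A *v b))"
    by (simp add: linear_sum[OF matrix_vector_mul_linear] matrix_vector_mult_scaleR)
  also have "\<dots> = (\<Sum>b\<in>B. ((b \<bullet> (A *v b)) * (b \<bullet> u)) *\<^sub>R b)"
  proof (rule sum.cong)
    fix b assume "b \<in> B"
    hence e: "A *v b = (b \<bullet> (A *v b)) *\<^sub>R b" using assms(1) by blast
    show "(u \<bullet> b) *\<^sub>R (A *v b) = ((b \<bullet> (A *v b)) * (b \<bullet> u)) *\<^sub>R b"
      by (subst e) (simp add: inner_commute)
  qed simp
  finally show ?thesis .
qed

lemma sqrt_exists: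
  fixes C :: "real^'n^'n"
  assumes pd: "posdef C"
  shows "\<exists>S. posdef S \<and> S ** S = C"
proof -
  have sC: "sym_mat C" using pd by (simp add: posdef_def)
  obtain B where B: "finite B" "pairwise orthogonal B"
       "\<forall>b\<in>B. norm b = 1" "\<forall>b\<in>B. C *v b = (b \<bullet> (C *v b)) *\<^sub>R b"
       "\<forall>u. u = (\<Sum>b\<in>B. (u \<bullet> b) *\<^sub>R b)"
    using spectral[OF sC] by blast
  define l where "l b = b \<bullet> (C *v b)" for b
  have lpos: "l b > 0" if "b \<in> B" for b
  proof -
    have "b \<noteq> 0" using B(3) that by auto
    thus ?thesis using pd by (simp add: posdef_def l_def)
  qed
  define S where "S = (\<Sum>b\<in>B. sqrt (l b) *\<^sub>R outer b)"
  have Sv: "S *v u = (\<Sum>b\<in>B. (sqrt (l b) * (b \<bullet> u)) *\<^sub>R b)" for u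
    unfolding S_def by (rule smat_mult[OF B(1)])
  have Cv: "C *v u = (\<Sum>b\<in>B. (l b * (b \<bullet> u)) *\<^sub>R b)" for u
    unfolding l_def by (rule spec_expand[OF B(4) spec[OF B(5)]])
  have coef: "(\<Sum>b\<in>B. c b *\<^sub>R b) \<bullet> b0 = c b0" if "b0 \<in> B" for c b0
    using orth_coef[OF B(1-3) that] .
  have symS: "sym_mat S"
    unfolding sym_iff Sv
    by (simp add: inner_sum_left inner_sum_right inner_commute mult.commute mult.left_commute)
  have quad: "u \<bullet> (S *v u) = (\<Sum>b\<in>B. sqrt (l b) * (b \<bullet> u)^2)" for u
    unfolding Sv by (simp add: inner_sum_right power2_eq_square inner_commute mult.assoc)
  have pS: "posdef S"
    unfolding posdef_def
  proof (intro conjI allI impI symS)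
    fix u :: "real^'n" assume "u \<noteq> 0"
    then obtain b0 where b0: "b0 \<in> B" "b0 \<bullet> u \<noteq> 0"
      using B(5) by (metis (no_types, lifting) inner_commute scale_eq_0_iff sum.neutral)
    have "0 < sqrt (l b0) * (b0 \<bullet> u)^2" using lpos[OF b0(1)] b0(2) by simp
    also have "\<dots> \<le> (\<Sum>b\<in>B. sqrt (l b) * (b \<bullet> u)^2)"
      using b0(1) B(1) lpos by (intro member_le_sum) (auto simp: less_imp_le)
    finally show "u \<bullet> (S *v u) > 0" using quad by simp
  qed
  have "S ** S = C"
  proof (rule matrix_eq[THEN iffD2], rule allI)
    fix u
    have "(S ** S) *v u = S *v (S *v u)" by (simp add: matrix_vector_mul_assoc)
    also have "\<dots> = (\<Sum>b\<in>B. (sqrt (l b) * (b \<bullet> (S *v u))) *\<^sub>R b)" by (rule Sv)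
    also have "\<dots> = (\<Sum>b\<in>B. (l b * (b \<bullet> u)) *\<^sub>R b)"
    proof (rule sum.cong)
      fix b assume b: "b \<in> B"
      have "b \<bullet> (S *v u) = sqrt (l b) * (b \<bullet> u)"
        unfolding Sv using coef[OF b] by (simp add: inner_commute)
      thus "(sqrt (l b) * (b \<bullet> (S *v u))) *\<^sub>R b = (l b * (b \<bullet> u)) *\<^sub>R b"
        using lpos[OF b] by (simp add: mult.assoc[symmetric])
    qed simp
    also have "\<dots> = C *v u" by (rule Cv[symmetric])
    finally show "(S ** S) *v u = C *v u" .
  qed
  thus ?thesis using pS by blast
qed

lemma sqrt_unique:
  fixes S1 S2 :: "real^'n^'n"
  assumes p1: "posdef S1" and p2: "posdef S2" and eq: "S1 ** S1 = S2 ** S2"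
  shows "S1 = S2"
proof -
  define D where "D = S1 - S2"
  have s1: "sym_mat S1" and s2: "sym_mat S2" using p1 p2 by (auto simp: posdef_def)
  have sD: "sym_mat D" using s1 s2 by (simp add: sym_mat_def D_def transpose_def vec_eq_iff)
  obtain B where B: "finite B" "pairwise orthogonal B"
       "\<forall>b\<in>B. norm b = 1 \<and> D *v b = (b \<bullet> (D *v b)) *\<^sub>R b"
       "\<forall>u. u = (\<Sum>b\<in>B. (u \<bullet> b) *\<^sub>R b)"
    using spectral[OF sD] by blast
  have mu0: "b \<bullet> (D *v b) = 0" if b: "b \<in> B" for b
  proof -
    define m where "m = b \<bullet> (D *v b)"
    have Db: "D *v b = m *\<^sub>R b" using B(3) b m_def by auto
    have bnz: "b \<noteq> 0" using B(3) b by auto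
    have key: "S1 *v (D *v b) + D *v (S2 *v b) = 0"
    proof -
      have "S1 *v (D *v b) + D *v (S2 *v b) = S1 *v (S1 *v b - S2 *v b) + (S1 *v (S2 *v b) - S2 *v (S2 *v b))"
        unfolding D_def by (simp add: matrix_vector_mult_diff_rdistrib)
      also have "\<dots> = S1 *v (S1 *v b) - S2 *v (S2 *v b)"
        by (simp add: matrix_vector_mult_diff_distrib)
      also have "\<dots> = 0" by (simp add: matrix_vector_mul_assoc eq)
      finally show ?thesis .
    qed
    have "0 = b \<bullet> (S1 *v (D *v b)) + b \<bullet> (D *v (S2 *v b))"
      using key by (metis inner_add_right inner_zero_right)
    also have "b \<bullet> (D *v (S2 *v b)) = (D *v b) \<bullet> (S2 *v b)" using symD[OF sD] by simp
    finally have "0 = m * (b \<bullet> (S1 *v b) + b \<bullet> (S2 *v b))"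
      unfolding Db by (simp add: matrix_vector_mult_scaleR algebra_simps)
    moreover have "b \<bullet> (S1 *v b) + b \<bullet> (S2 *v b) > 0"
      using p1 p2 bnz by (simp add: posdef_def add_pos_pos)
    ultimately show ?thesis unfolding m_def by simp
  qed
  have "D *v u = 0" for u
  proof -
    have "D *v u = (\<Sum>b\<in>B. ((b \<bullet> (D *v b)) * (b \<bullet> u)) *\<^sub>R b)"
      using B(3) by (intro spec_expand[OF _ spec[OF B(4)]]) auto
    also have "\<dots> = 0" using mu0 by simp
    finally show ?thesis .
  qed
  hence "S1 *v u = S2 *v u" for u
    by (simp add: D_def matrix_vector_mult_diff_rdistrib)
  thus ?thesis by (simp add: matrix_eq)
qed

lemma mat_sqrt_props:
  fixes C :: "real^'n^'n"
  assumes "posdef C"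
  shows "posdef (mat_sqrt C) \<and> mat_sqrt C ** mat_sqrt C = C"
proof -
  have "\<exists>!S. posdef S \<and> S ** S = C"
    using sqrt_exists[OF assms] sqrt_unique by metis
  thus ?thesis unfolding mat_sqrt_def by (rule theI')
qed

lemma posdef_inv:
  fixes S :: "real^'n^'n"
  assumes p: "posdef S"
  shows "S ** matrix_inv S = mat 1 \<and> matrix_inv S ** S = mat 1 \<and> sym_mat (matrix_inv S)"
proof -
  have "inj ((*v) S)"
  proof (rule injI)
    fix u v assume "S *v u = S *v v"
    hence "S *v (u - v) = 0" by (simp add: matrix_vector_mult_diff_distrib)
    hence "(u - v) \<bullet> (S *v (u - v)) = 0" by simp
    thus "u = v" using p unfolding posdef_def by (metis less_irrefl right_minus_eq)
  qed
  hence "invertible S" using matrix_left_invertible_injective invertible_left_inverse by blast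
  hence inv: "S ** matrix_inv S = mat 1 \<and> matrix_inv S ** S = mat 1"
    unfolding invertible_def matrix_inv_def by (rule someI_ex)
  have tS: "transpose S = S" using p by (simp add: posdef_def sym_mat_def)
  let ?Si = "matrix_inv S"
  have "transpose ?Si ** S = mat 1"
    using arg_cong[OF conjunct1[OF inv], of transpose] by (simp add: matrix_transpose_mul tS)
  hence "transpose ?Si = transpose ?Si ** (S ** ?Si)" using inv by simp
  also have "\<dots> = ?Si" by (simp add: matrix_mul_assoc \<open>transpose ?Si ** S = mat 1\<close>)
  finally show ?thesis using inv by (simp add: sym_mat_def)
qed

lemma cov_quad:
  fixes x :: "real^'n^'t"
  shows "(\<Sum>t\<in>UNIV. (u \<bullet> x$t)^2) = real CARD('t) * (u \<bullet> (cov x *v u))"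
proof -
  have "cov x *v u = (1 / real CARD('t)) *\<^sub>R (\<Sum>t\<in>UNIV. (x$t \<bullet> u) *\<^sub>R x$t)"
    unfolding cov_def by (simp add: scaleR_matrix_vector_assoc[symmetric] sum_mat_mult outer_mult)
  hence "u \<bullet> (cov x *v u) = (1 / real CARD('t)) * (\<Sum>t\<in>UNIV. (u \<bullet> x$t)^2)"
    by (simp add: inner_sum_right power2_eq_square inner_commute)
  thus ?thesis by simp
qed

lemma quad_W:
  fixes W :: "real^'k^'n"
  shows "y \<bullet> ((W ** diag_mat g ** transpose W) *v y) = (\<Sum>i\<in>UNIV. g$i * (column i W \<bullet> y)^2)"
proof -
  have "y \<bullet> ((W ** diag_mat g ** transpose W) *v y) = y \<bullet> (W *v (diag_mat g *v (transpose W *v y)))"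
    by (simp only: matrix_vector_mul_assoc matrix_mul_assoc)
  also have "\<dots> = (transpose W *v y) \<bullet> (diag_mat g *v (transpose W *v y))"
    by (metis dot_lmul_matrix transpose_matrix_vector)
  also have "\<dots> = (\<Sum>i\<in>UNIV. g$i * (column i W \<bullet> y)^2)"
  proof -
    have c: "(transpose W *v y)$i = column i W \<bullet> y" for i
      by (simp add: matrix_vector_mult_def transpose_def column_def inner_vec_def mult.commute)
    have d: "(diag_mat g *v z)$i = g$i * z$i" for z :: "real^'k" and i
    proof -
      have e: "(\<lambda>j. (if i = j then g$i else 0) * z$j) = (\<lambda>j. if i = j then g$i * z$i else 0)" by auto
      have "(diag_mat g *v z)$i = (\<Sum>j\<in>UNIV. (if i = j then g$i else 0) * z$j)"
        by (simp add: matrix_vector_mult_def diag_mat_def)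
      also have "\<dots> = g$i * z$i" unfolding e by simp
      finally show ?thesis .
    qed
    have "(transpose W *v y) \<bullet> (diag_mat g *v (transpose W *v y)) =
       (\<Sum>i\<in>UNIV. (transpose W *v y)$i * (diag_mat g *v (transpose W *v y))$i)"
      by (simp add: inner_vec_def)
    also have "\<dots> = (\<Sum>i\<in>UNIV. g$i * (column i W \<bullet> y)^2)"
      by (simp only: c d power2_eq_square mult.commute mult.left_commute)
    finally show ?thesis .
  qed
  finally show ?thesis .
qed

lemma W_sum:
  fixes W :: "real^'k^'n"
  shows "W ** diag_mat g ** transpose W = (\<Sum>i\<in>UNIV. g$i *\<^sub>R outer (column i W))"
proof -
  have e: "(W ** diag_mat g)$a$k = W$a$k * g$k" for a k
    by (simp add: matrix_matrix_mult_def diag_mat_def if_distrib cong: if_cong)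
  show ?thesis
    by (simp add: vec_eq_iff matrix_matrix_mult_def[of "W ** diag_mat g"] e transpose_def
        outer_def column_def mult.commute mult.left_commute)
qed

lemma span_range_sum:
  fixes f :: "'k::finite \<Rightarrow> 'a::real_vector"
  assumes "A \<in> span (f ` UNIV)"
  shows "\<exists>g. A = (\<Sum>i\<in>UNIV. g i *\<^sub>R f i)"
  using assms
proof (induction rule: span_induct_alt)
  case base
  then show ?case by (intro exI[of _ "\<lambda>_. 0"]) simp
next
  case (step c x y)
  then obtain g where g: "y = (\<Sum>i\<in>UNIV. g i *\<^sub>R f i)" by blast
  obtain j where j: "x = f j" using step(1) by blast
  have "(\<Sum>i\<in>UNIV. (g i + (if i = j then c else 0)) *\<^sub>R f i)
     = (\<Sum>i\<in>UNIV. g i *\<^sub>R f i) + (\<Sum>i\<in>UNIV. (if i = j then c *\<^sub>R f i else 0))"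
  proof -
    have e: "(\<lambda>i. (if i = j then c else 0) *\<^sub>R f i) = (\<lambda>i. if i = j then c *\<^sub>R f i else 0)" by auto
    have "(\<Sum>i\<in>UNIV. (g i + (if i = j then c else 0)) *\<^sub>R f i)
     = (\<Sum>i\<in>UNIV. g i *\<^sub>R f i) + (\<Sum>i\<in>UNIV. (if i = j then c else 0) *\<^sub>R f i)"
      by (simp add: scaleR_add_left sum.distrib)
    also have "\<dots> = (\<Sum>i\<in>UNIV. g i *\<^sub>R f i) + (\<Sum>i\<in>UNIV. (if i = j then c *\<^sub>R f i else 0))"
      by (simp only: e)
    finally show ?thesis .
  qed
  also have "\<dots> = c *\<^sub>R x + y" using g j by simp
  finally show ?case by metis
qed

lemma pert:
  fixes S Si :: "real^'n^'n"
  assumes sS: "sym_mat S" and inv: "S ** Si = mat 1"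
  shows "(norm (x - y))^2 + (y \<bullet> (S *v y) - y \<bullet> y) =
    (norm (x - Si *v x))^2 + ((Si *v x) \<bullet> (S *v (Si *v x)) - (Si *v x) \<bullet> (Si *v x))
    + (y - Si *v x) \<bullet> (S *v (y - Si *v x))"
proof -
  define p where "p = Si *v x"
  have Sp: "S *v p = x" unfolding p_def by (simp add: matrix_vector_mul_assoc inv)
  have pSy: "p \<bullet> (S *v y) = x \<bullet> y" using symD[OF sS, of p y] Sp by simp
  show ?thesis
    unfolding p_def[symmetric]
    by (simp add: power2_norm_eq_inner inner_diff_left inner_diff_right
        matrix_vector_mult_diff_distrib Sp pSy inner_commute algebra_simps)
qed

lemma qconv:
  fixes S :: "real^'n^'n"
  assumes sS: "sym_mat S"
  shows "u * (p \<bullet> (S *v p)) + (1-u) * (r \<bullet> (S *v r))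
     - (u *\<^sub>R p + (1-u) *\<^sub>R r) \<bullet> (S *v (u *\<^sub>R p + (1-u) *\<^sub>R r))
     = u*(1-u) * ((p - r) \<bullet> (S *v (p - r)))"
proof -
  have e: "r \<bullet> (S *v p) = p \<bullet> (S *v r)" using symD[OF sS, of p r] by (simp add: inner_commute)
  show ?thesis
    by (simp add: inner_add_left inner_add_right inner_diff_left inner_diff_right
        matrix_vector_mult_diff_distrib matrix_vector_right_distrib matrix_vector_mult_scaleR e
        algebra_simps power2_eq_square)
qed

lemma q_nonneg: "posdef S \<Longrightarrow> 0 \<le> z \<bullet> (S *v z)"
  by (cases "z = 0") (auto simp: posdef_def less_imp_le)

lemma sumq_pos:
  fixes S :: "real^'n^'n" and z :: "'t::finite \<Rightarrow> real^'n"
  assumes "posdef S" "z t0 \<noteq> 0"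
  shows "0 < (\<Sum>t\<in>UNIV. z t \<bullet> (S *v z t))"
proof -
  have "0 < z t0 \<bullet> (S *v z t0)" using assms by (simp add: posdef_def)
  also have "\<dots> \<le> (\<Sum>t\<in>UNIV. z t \<bullet> (S *v z t))"
    by (rule member_le_sum) (auto intro: q_nonneg[OF assms(1)])
  finally show ?thesis .
qed

lemma lagr_inner:
  fixes W :: "real^'k^'n"
  shows "(\<Sum>i\<in>UNIV. g$i * ((column i W \<bullet> v)^2 - 1)) =
    v \<bullet> ((W ** diag_mat g ** transpose W) *v v) - (\<Sum>i\<in>UNIV. g$i)"
  by (simp add: quad_W right_diff_distrib sum_subtractf)

theorem mainTheorem4:
  fixes x :: "real^'n^'t" and W :: "real^'k^'n"
  assumes pd: "posdef (cov x)"
    and unit: "\<forall>i. norm (column i W) = 1"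
    and spn: "span ((\<lambda>i. outer (column i W)) ` UNIV) = {A :: real^'n^'n. sym_mat A}"
  defines "ystar \<equiv> (\<chi> t. matrix_inv (mat_sqrt (cov x)) *v (x$t))"
  shows "(\<exists>g. mat 1 + W ** diag_mat g ** transpose W = mat_sqrt (cov x))
    \<and> (\<forall>gs. mat 1 + W ** diag_mat gs ** transpose W = mat_sqrt (cov x) \<longrightarrow>
         (\<forall>y g. lagr x W ystar g \<le> lagr x W ystar gs \<and> lagr x W ystar gs \<le> lagr x W y gs)
       \<and> (INF y. SUP g. ereal (lagr x W y g)) = ereal (lagr x W ystar gs)
       \<and> (SUP g. INF y. ereal (lagr x W y g)) = ereal (lagr x W ystar gs)
       \<and> (SUP g. ereal (lagr x W ystar g)) = ereal (lagr x W ystar gs)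
       \<and> (INF y. ereal (lagr x W y gs)) = ereal (lagr x W ystar gs)
       \<and> strictly_convex_on UNIV (\<lambda>y. lagr x W y gs)
       \<and> (\<forall>y. y \<noteq> ystar \<longrightarrow> lagr x W ystar gs < lagr x W y gs))"
proof -
  define C where "C = cov x"
  define S where "S = mat_sqrt C"
  define Si where "Si = matrix_inv S"
  define T where "T = real CARD('t)"
  have Tpos: "T > 0" by (simp add: T_def)
  have pS: "posdef S" and SS: "S ** S = C"
    using mat_sqrt_props[OF pd[folded C_def]] by (auto simp: S_def)
  have sS: "sym_mat S" using pS by (simp add: posdef_def)
  have inv1: "S ** Si = mat 1" and inv2: "Si ** S = mat 1" and sSi: "sym_mat Si"
    using posdef_inv[OF pS] by (auto simp: Si_def)
  have ys: "ystar$t = Si *v x$t" for t by (simp add: ystar_def Si_def S_def C_def)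
  have ex: "\<exists>g. mat 1 + W ** diag_mat g ** transpose W = S"
  proof -
    have "sym_mat (S - mat 1)" using sS
      by (simp add: sym_mat_def transpose_def vec_eq_iff mat_def)
    hence "S - mat 1 \<in> span ((\<lambda>i. outer (column i W)) ` UNIV)" using spn by simp
    then obtain g0 where g0: "S - mat 1 = (\<Sum>i\<in>UNIV. g0 i *\<^sub>R outer (column i W))"
      using span_range_sum by blast
    have "W ** diag_mat (\<chi> i. g0 i) ** transpose W = S - mat 1"
      by (simp add: W_sum g0)
    thus ?thesis by (intro exI[of _ "\<chi> i. g0 i"]) simp
  qed
  define L0 where "L0 = (1 / T) * (\<Sum>t\<in>UNIV. (norm (x$t - ystar$t))^2)"
  have one: "(\<Sum>t\<in>UNIV. (c \<bullet> ystar$t)^2) = T" if "norm c = 1" for c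
  proof -
    have "(\<Sum>t\<in>UNIV. (c \<bullet> ystar$t)^2) = (\<Sum>t\<in>UNIV. ((Si *v c) \<bullet> x$t)^2)"
      unfolding ys using symD[OF sSi] by simp
    also have "\<dots> = T * ((Si *v c) \<bullet> (C *v (Si *v c)))"
      unfolding cov_quad T_def C_def ..
    also have "(Si *v c) \<bullet> (C *v (Si *v c)) = c \<bullet> (Si *v (C *v (Si *v c)))"
      using symD[OF sSi] by simp
    also have "Si *v (C *v (Si *v c)) = c"
    proof -
      have "Si *v (C *v (Si *v c)) = (Si ** S) *v ((S ** Si) *v c)"
        unfolding SS[symmetric] by (simp add: matrix_vector_mul_assoc matrix_mul_assoc)
      thus ?thesis by (simp add: inv1 inv2)
    qed
    also have "c \<bullet> c = 1" using that by (simp add: dot_square_norm)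
    finally show ?thesis by simp
  qed
  have Lys: "lagr x W ystar g = L0" for g
  proof -
    have "(\<Sum>t\<in>UNIV. \<Sum>i\<in>UNIV. g$i * ((column i W \<bullet> ystar$t)^2 - 1))
       = (\<Sum>i\<in>UNIV. g$i * ((\<Sum>t\<in>UNIV. (column i W \<bullet> ystar$t)^2) - T))"
      by (subst sum.swap) (simp add: sum_distrib_left right_diff_distrib sum_subtractf T_def mult.commute)
    also have "\<dots> = 0" using one unit by simp
    finally have z: "(\<Sum>t\<in>UNIV. \<Sum>i\<in>UNIV. g$i * ((column i W \<bullet> ystar$t)^2 - 1)) = 0" .
    show ?thesis unfolding lagr_def L0_def T_def[symmetric]
      by (simp add: sum.distrib z)
  qed
  have part1: "\<exists>g. mat 1 + W ** diag_mat g ** transpose W = mat_sqrt (cov x)"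
      using ex by (simp add: S_def C_def)
  have part2: "(\<forall>y g. lagr x W ystar g \<le> lagr x W ystar gs \<and> lagr x W ystar gs \<le> lagr x W y gs)
       \<and> (INF y. SUP g. ereal (lagr x W y g)) = ereal (lagr x W ystar gs)
       \<and> (SUP g. INF y. ereal (lagr x W y g)) = ereal (lagr x W ystar gs)
       \<and> (SUP g. ereal (lagr x W ystar g)) = ereal (lagr x W ystar gs)
       \<and> (INF y. ereal (lagr x W y gs)) = ereal (lagr x W ystar gs)
       \<and> strictly_convex_on UNIV (\<lambda>y. lagr x W y gs)
       \<and> (\<forall>y. y \<noteq> ystar \<longrightarrow> lagr x W ystar gs < lagr x W y gs)"
    if geq: "mat 1 + W ** diag_mat gs ** transpose W = mat_sqrt (cov x)" for gs
  proof -
    have M: "W ** diag_mat gs ** transpose W = S - mat 1"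
      using geq by (simp add: S_def C_def eq_diff_eq add.commute)
    define G where "G = (\<Sum>i\<in>UNIV. gs$i)"
    define q where "q z = z \<bullet> (S *v z)" for z
    have Lf: "lagr x W y gs = (1/T) * (\<Sum>t\<in>UNIV. (norm (x$t - y$t))^2 + (y$t \<bullet> (S *v y$t) - y$t \<bullet> y$t) - G)" for y
      unfolding lagr_def lagr_inner M T_def[symmetric] G_def
      by (simp add: matrix_vector_mult_diff_rdistrib inner_diff_right algebra_simps)
    have key: "lagr x W y gs = lagr x W ystar gs + (1/T) * (\<Sum>t\<in>UNIV. q (y$t - ystar$t))" for y
    proof -
      have "lagr x W y gs = (1/T) * (\<Sum>t\<in>UNIV. ((norm (x$t - ystar$t))^2 + (ystar$t \<bullet> (S *v ystar$t) - ystar$t \<bullet> ystar$t) - G) + q (y$t - ystar$t))"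
        unfolding Lf
      proof (intro arg_cong[where f="\<lambda>z. (1/T) * z"] sum.cong[OF refl])
        fix t
        show "(norm (x$t - y$t))^2 + (y$t \<bullet> (S *v y$t) - y$t \<bullet> y$t) - G =
          (norm (x$t - ystar$t))^2 + (ystar$t \<bullet> (S *v ystar$t) - ystar$t \<bullet> ystar$t) - G + q (y$t - ystar$t)"
          unfolding q_def ys using pert[OF sS inv1, of "x$t" "y$t"] by linarith
      qed
      also have "\<dots> = lagr x W ystar gs + (1/T) * (\<Sum>t\<in>UNIV. q (y$t - ystar$t))"
        unfolding Lf[of ystar] by (simp add: sum.distrib distrib_left)
      finally show ?thesis .
    qed
    have qnn: "0 \<le> (\<Sum>t\<in>UNIV. q (z t))" for z
      unfolding q_def by (intro sum_nonneg q_nonneg[OF pS])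
    have ge: "lagr x W ystar gs \<le> lagr x W y gs" for y
      using key[of y] qnn[of "\<lambda>t. y$t - ystar$t"] Tpos by simp
    have gt: "lagr x W ystar gs < lagr x W y gs" if yne: "y \<noteq> ystar" for y
    proof -
      obtain t0 where "y$t0 \<noteq> ystar$t0" using yne unfolding vec_eq_iff[of y] by blast
      hence "0 < (\<Sum>t\<in>UNIV. q (y$t - ystar$t))"
        unfolding q_def by (intro sumq_pos[OF pS, of "\<lambda>t. y$t - ystar$t" t0]) simp
      thus ?thesis using key[of y] Tpos by simp
    qed
    have Lc: "lagr x W ystar g = lagr x W ystar gs" for g using Lys by simp
    have h1: "\<forall>y g. lagr x W ystar g \<le> lagr x W ystar gs \<and> lagr x W ystar gs \<le> lagr x W y gs"
      using Lc ge by (metis order_refl)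
    have h7: "\<forall>y. y \<noteq> ystar \<longrightarrow> lagr x W ystar gs < lagr x W y gs" using gt by blast
    have supc: "(SUP g. ereal (lagr x W ystar g)) = ereal (lagr x W ystar gs)"
    proof -
      have "(\<lambda>g. ereal (lagr x W ystar g)) = (\<lambda>g. ereal (lagr x W ystar gs))" using Lc by (intro ext) metis
      thus ?thesis by (simp only:) simp
    qed
    have h4: "(SUP g. ereal (lagr x W ystar g)) = ereal (lagr x W ystar gs)" by (rule supc)
    have infc: "(INF y. ereal (lagr x W y gs)) = ereal (lagr x W ystar gs)"
    proof (rule antisym)
      show "(INF y. ereal (lagr x W y gs)) \<le> ereal (lagr x W ystar gs)" by (rule INF_lower) simp
      show "ereal (lagr x W ystar gs) \<le> (INF y. ereal (lagr x W y gs))"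
        by (rule INF_greatest) (simp add: ge)
    qed
    have h5: "(INF y. ereal (lagr x W y gs)) = ereal (lagr x W ystar gs)" by (rule infc)
    have h2: "(INF y. SUP g. ereal (lagr x W y g)) = ereal (lagr x W ystar gs)"
    proof (rule antisym)
      show "(INF y. SUP g. ereal (lagr x W y g)) \<le> ereal (lagr x W ystar gs)"
        by (rule INF_lower2[of ystar]) (auto simp: supc)
      show "ereal (lagr x W ystar gs) \<le> (INF y. SUP g. ereal (lagr x W y g))"
      proof (rule INF_greatest)
        fix y
        have "ereal (lagr x W ystar gs) \<le> ereal (lagr x W y gs)" using ge by simp
        also have "\<dots> \<le> (SUP g. ereal (lagr x W y g))" by (rule SUP_upper) simp
        finally show "ereal (lagr x W ystar gs) \<le> (SUP g. ereal (lagr x W y g))" .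
      qed
    qed
    have h3: "(SUP g. INF y. ereal (lagr x W y g)) = ereal (lagr x W ystar gs)"
    proof (rule antisym)
      show "(SUP g. INF y. ereal (lagr x W y g)) \<le> ereal (lagr x W ystar gs)"
      proof (rule SUP_least)
        fix g
        have "(INF y. ereal (lagr x W y g)) \<le> ereal (lagr x W ystar g)" by (rule INF_lower) simp
        thus "(INF y. ereal (lagr x W y g)) \<le> ereal (lagr x W ystar gs)" using Lc[of g] by simp
      qed
      show "ereal (lagr x W ystar gs) \<le> (SUP g. INF y. ereal (lagr x W y g))"
        by (rule SUP_upper2[of gs]) (auto simp: infc)
    qed
    have h6: "strictly_convex_on UNIV (\<lambda>y. lagr x W y gs)"
      unfolding strictly_convex_on_def
    proof (intro conjI ballI impI allI convex_UNIV)
      fix a b :: "real^'n^'t" and u :: real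
      assume ab: "a \<noteq> b" and u: "0 < u \<and> u < 1"
      define K where "K = lagr x W ystar gs"
      let ?a = "\<lambda>t. a$t - ystar$t" and ?b = "\<lambda>t. b$t - ystar$t"
      have comb: "(u *\<^sub>R a + (1 - u) *\<^sub>R b)$t - ystar$t = u *\<^sub>R ?a t + (1-u) *\<^sub>R ?b t" for t
        by (simp add: algebra_simps)
      have diff: "u * lagr x W a gs + (1 - u) * lagr x W b gs - lagr x W (u *\<^sub>R a + (1 - u) *\<^sub>R b) gs
          = (1/T) * (u * (1-u) * (\<Sum>t\<in>UNIV. q (a$t - b$t)))"
      proof -
        have "u * lagr x W a gs + (1 - u) * lagr x W b gs - lagr x W (u *\<^sub>R a + (1 - u) *\<^sub>R b) gs
          = (1/T) * (\<Sum>t\<in>UNIV. u * q (?a t) + (1-u) * q (?b t) - q (u *\<^sub>R ?a t + (1-u) *\<^sub>R ?b t))"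
        proof -
          have e: "(\<Sum>t\<in>UNIV. u * q (?a t) + (1-u) * q (?b t) - q (u *\<^sub>R ?a t + (1-u) *\<^sub>R ?b t))
            = u * (\<Sum>t\<in>UNIV. q (?a t)) + (1-u) * (\<Sum>t\<in>UNIV. q (?b t)) - (\<Sum>t\<in>UNIV. q (u *\<^sub>R ?a t + (1-u) *\<^sub>R ?b t))"
            by (simp add: sum_subtractf sum.distrib sum_distrib_left)
          show ?thesis
            unfolding e key[of a] key[of b] key[of "u *\<^sub>R a + (1 - u) *\<^sub>R b"] comb
            using Tpos by (simp add: field_simps)
        qed
        also have "\<dots> = (1/T) * (\<Sum>t\<in>UNIV. u * (1-u) * q (a$t - b$t))"
          unfolding q_def qconv[OF sS] by simp
        also have "\<dots> = (1/T) * (u * (1-u) * (\<Sum>t\<in>UNIV. q (a$t - b$t)))"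
          by (simp add: sum_distrib_left)
        finally show ?thesis .
      qed
      obtain t0 where "a$t0 \<noteq> b$t0" using ab unfolding vec_eq_iff[of a] by blast
      hence "0 < (\<Sum>t\<in>UNIV. q (a$t - b$t))"
        unfolding q_def by (intro sumq_pos[OF pS, of "\<lambda>t. a$t - b$t" t0]) simp
      hence "0 < (1/T) * (u * (1-u) * (\<Sum>t\<in>UNIV. q (a$t - b$t)))"
        using u Tpos by simp
      thus "lagr x W (u *\<^sub>R a + (1 - u) *\<^sub>R b) gs < u * lagr x W a gs + (1 - u) * lagr x W b gs"
        using diff by linarith
    qed
    show ?thesis using h1 h2 h3 h4 h5 h6 h7 by blast
  qed
  show ?thesis using part1 part2 by blast
qed

end
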